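(* Let $|\psi\rangle\in H_A\otimes H_B$ be a unit vector in a finite-dimensional bipartite Hilbert space, $\rho=|\psi\rangle\langle\psi|$, and $\rho_A=\mathrm{Tr}_B\rho$, $\rho_B=\mathrm{Tr}_A\rho$. For density operators $\rho,\sigma$ define $D_2(\rho,\sigma)=\sqrt{2-2\,\mathrm{Tr}(\rho^{1/2}\sigma^{1/2})}$. Then $$D_2(\rho,\rho_A\otimes\rho_B)=C(\rho),\qquad\text{where } C(\rho)=\sqrt{2-2\,\mathrm{Tr}(\rho_A^2)}.$$
   Context: $\rho^{1/2}$ denotes the positive square root of a positive semidefinite operator. $C(\rho)$ is the concurrence of the pure state $\rho$. *)

theory Defs
  imports Complex_Main "Jordan_Normal_Form.Matrix"
begin

text \<open>Finite-dimensional bipartite system H_A (x) H_B with dim H_A = dA, dim H_B = dB.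
  Basis vector e_i (x) f_j of the product space is indexed by i * dB + j.\<close>

definition mtrace :: "complex mat \<Rightarrow> complex" where
  "mtrace A = (\<Sum>i<dim_row A. A $$ (i, i))"

definition adj :: "complex mat \<Rightarrow> complex mat" where
  "adj A = mat (dim_col A) (dim_row A) (\<lambda>(i, j). cnj (A $$ (j, i)))"

definition psd :: "complex mat \<Rightarrow> bool" where
  "psd A \<longleftrightarrow> dim_row A = dim_col A \<and> adj A = A \<and>
     (\<forall>v. dim_vec v = dim_row A \<longrightarrow>
        0 \<le> Re (\<Sum>i<dim_row A. cnj (v $ i) * (A *\<^sub>v v) $ i))"

definition msqrt :: "complex mat \<Rightarrow> complex mat" where
  "msqrt A = (THE B. psd B \<and> dim_row B = dim_row A \<and> B * B = A)"

definition proj :: "complex vec \<Rightarrow> complex mat" where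
  "proj v = mat (dim_vec v) (dim_vec v) (\<lambda>(i, j). v $ i * cnj (v $ j))"

definition ptrace_B :: "nat \<Rightarrow> nat \<Rightarrow> complex mat \<Rightarrow> complex mat" where
  "ptrace_B dA dB R = mat dA dA (\<lambda>(i, i'). \<Sum>j<dB. R $$ (i * dB + j, i' * dB + j))"

definition ptrace_A :: "nat \<Rightarrow> nat \<Rightarrow> complex mat \<Rightarrow> complex mat" where
  "ptrace_A dA dB R = mat dB dB (\<lambda>(j, j'). \<Sum>i<dA. R $$ (i * dB + j, i * dB + j'))"

definition tensor :: "complex mat \<Rightarrow> complex mat \<Rightarrow> complex mat" where
  "tensor X Y = mat (dim_row X * dim_row Y) (dim_col X * dim_col Y)
     (\<lambda>(r, c). X $$ (r div dim_row Y, c div dim_col Y) * Y $$ (r mod dim_row Y, c mod dim_col Y))"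

definition D2 :: "complex mat \<Rightarrow> complex mat \<Rightarrow> real" where
  "D2 \<rho> \<sigma> = sqrt (2 - 2 * Re (mtrace (msqrt \<rho> * msqrt \<sigma>)))"

definition concurrence :: "nat \<Rightarrow> nat \<Rightarrow> complex mat \<Rightarrow> real" where
  "concurrence dA dB \<rho> = sqrt (2 - 2 * Re (mtrace (ptrace_B dA dB \<rho> * ptrace_B dA dB \<rho>)))"

end

theory Submission
  imports Defs "Jordan_Normal_Form.Schur_Decomposition"
begin


definition qf :: "complex mat \<Rightarrow> complex vec \<Rightarrow> complex" where
  "qf A v = (\<Sum>i<dim_row A. cnj (v $ i) * (A *\<^sub>v v) $ i)"

lemma mv_idx: "i < dim_row A \<Longrightarrow> dim_vec v = dim_col A \<Longrightarrow>
   (A *\<^sub>v v) $ i = (\<Sum>j<dim_col A. A $$ (i,j) * v $ j)"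
  by (simp add: scalar_prod_def row_def lessThan_atLeast0)

lemma mm_idx: "i < dim_row A \<Longrightarrow> j < dim_col B \<Longrightarrow> dim_col A = dim_row B \<Longrightarrow>
   (A * B) $$ (i,j) = (\<Sum>k<dim_col A. A $$ (i,k) * B $$ (k,j))"
  by (simp add: scalar_prod_def row_def col_def lessThan_atLeast0)

lemma adj_dims[simp]: "dim_row (adj A) = dim_col A" "dim_col (adj A) = dim_row A"
  by (auto simp: adj_def)

lemma adj_idx[simp]: "i < dim_col A \<Longrightarrow> j < dim_row A \<Longrightarrow> adj A $$ (i,j) = cnj (A $$ (j,i))"
  by (simp add: adj_def)

lemma adj_adj[simp]: "adj (adj A) = A"
  by (rule eq_matI) auto

definition herm :: "complex mat \<Rightarrow> bool" where
  "herm A \<longleftrightarrow> dim_row A = dim_col A \<and> (\<forall>i<dim_row A. \<forall>j<dim_row A. A $$ (i,j) = cnj (A $$ (j,i)))"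

lemma herm_adj: "herm A \<longleftrightarrow> dim_row A = dim_col A \<and> adj A = A"
proof
  assume h: "herm A"
  hence sq: "dim_row A = dim_col A" unfolding herm_def by blast
  have "adj A = A"
  proof (rule eq_matI)
    fix i j assume ij: "i < dim_row A" "j < dim_col A"
    have j: "j < dim_row A" using ij sq by simp
    have "A $$ (i,j) = cnj (A $$ (j,i))" using h ij(1) j unfolding herm_def by blast
    thus "adj A $$ (i,j) = A $$ (i,j)" using ij sq by simp
  qed (use sq in simp_all)
  with sq show "dim_row A = dim_col A \<and> adj A = A" by blast
next
  assume h: "dim_row A = dim_col A \<and> adj A = A"
  { fix i j assume ij: "i < dim_row A" "j < dim_row A"
    have "adj A $$ (i,j) = cnj (A $$ (j,i))" using h ij by (intro adj_idx) auto
    hence "A $$ (i,j) = cnj (A $$ (j,i))" using h by simp }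
  with h show "herm A" unfolding herm_def by blast
qed

lemma psd_iff: "psd A \<longleftrightarrow> herm A \<and> (\<forall>v. dim_vec v = dim_row A \<longrightarrow> 0 \<le> Re (qf A v))"
  unfolding psd_def herm_adj qf_def by (simp only: conj_assoc)

lemma qf_expand: assumes "dim_row A = dim_col A" "dim_vec v = dim_row A"
  shows "qf A v = (\<Sum>i<dim_row A. \<Sum>j<dim_row A. cnj (v $ i) * A $$ (i,j) * v $ j)"
  unfolding qf_def
proof (intro sum.cong refl)
  fix i assume "i \<in> {..<dim_row A}"
  thus "cnj (v $ i) * (A *\<^sub>v v) $ i = (\<Sum>j<dim_row A. cnj (v $ i) * A $$ (i,j) * v $ j)"
    using assms by (simp only: mv_idx lessThan_iff) (simp add: sum_distrib_left mult.assoc)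
qed

lemma herm_qf_real: assumes "herm A" "dim_vec v = dim_row A"
  shows "cnj (qf A v) = qf A v"
proof -
  have sq: "dim_row A = dim_col A" using assms(1) unfolding herm_def by blast
  let ?n = "dim_row A"
  have "cnj (qf A v) = (\<Sum>i<?n. \<Sum>j<?n. v $ i * cnj (A $$ (i,j)) * cnj (v $ j))"
    by (simp add: qf_expand[OF sq assms(2)])
  also have "\<dots> = (\<Sum>i<?n. \<Sum>j<?n. v $ i * A $$ (j,i) * cnj (v $ j))"
  proof (intro sum.cong refl)
    fix i j assume "i \<in> {..<?n}" "j \<in> {..<?n}"
    hence "A $$ (j,i) = cnj (A $$ (i,j))" using assms(1) unfolding herm_def by blast
    thus "v $ i * cnj (A $$ (i,j)) * cnj (v $ j) = v $ i * A $$ (j,i) * cnj (v $ j)" by simp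
  qed
  also have "\<dots> = (\<Sum>j<?n. \<Sum>i<?n. cnj (v $ j) * A $$ (j,i) * v $ i)"
    by (subst sum.swap) (intro sum.cong refl, simp only: mult.commute mult.left_commute)
  also have "\<dots> = qf A v" by (simp add: qf_expand[OF sq assms(2)])
  finally show ?thesis .
qed

lemma herm_qf_Im: assumes "herm A" "dim_vec v = dim_row A" shows "Im (qf A v) = 0"
proof -
  have "Im (cnj (qf A v)) = Im (qf A v)" using herm_qf_real[OF assms] by simp
  thus ?thesis by simp
qed


lemma row_dot[simp]: "i < dim_row A \<Longrightarrow> dim_vec v = dim_col A \<Longrightarrow>
   row A i \<bullet> v = (\<Sum>j<dim_col A. A $$ (i,j) * v $ j)"
  by (simp add: scalar_prod_def lessThan_atLeast0)

definition bf :: "complex mat \<Rightarrow> (nat \<Rightarrow> complex) \<Rightarrow> (nat \<Rightarrow> complex) \<Rightarrow> complex" where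
  "bf A f g = (\<Sum>i<dim_row A. \<Sum>j<dim_row A. cnj (f i) * A $$ (i,j) * g j)"

lemma qf_bf: "dim_row A = dim_col A \<Longrightarrow> dim_vec v = dim_row A \<Longrightarrow> qf A v = bf A (\<lambda>i. v $ i) (\<lambda>i. v $ i)"
  by (simp add: qf_expand bf_def)

lemma bf_comb: "bf A (\<lambda>i. f i + c * g i) (\<lambda>i. f i + c * g i) =
   bf A f f + c * bf A f g + cnj c * bf A g f + cnj c * c * bf A g g"
proof -
  have "bf A (\<lambda>i. f i + c * g i) (\<lambda>i. f i + c * g i) =
    (\<Sum>i<dim_row A. \<Sum>j<dim_row A. cnj (f i) * A $$ (i,j) * f j + c * (cnj (f i) * A $$ (i,j) * g j)
       + cnj c * (cnj (g i) * A $$ (i,j) * f j) + cnj c * c * (cnj (g i) * A $$ (i,j) * g j))"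
    unfolding bf_def by (intro sum.cong refl) (simp add: algebra_simps)
  also have "\<dots> = bf A f f + c * bf A f g + cnj c * bf A g f + cnj c * c * bf A g g"
    unfolding bf_def by (simp add: sum.distrib sum_distrib_left)
  finally show ?thesis .
qed

lemma psd_bf_nonneg: "psd A \<Longrightarrow> 0 \<le> Re (bf A f f)"
proof -
  assume p: "psd A"
  hence sq: "dim_row A = dim_col A" and pos: "\<And>v. dim_vec v = dim_row A \<Longrightarrow> 0 \<le> Re (qf A v)"
    unfolding psd_iff herm_def by blast+
  let ?v = "vec (dim_row A) f"
  have "bf A f f = bf A (\<lambda>i. ?v $ i) (\<lambda>i. ?v $ i)" unfolding bf_def by (intro sum.cong refl) simp
  also have "\<dots> = qf A ?v" using sq by (simp add: qf_bf)
  finally show ?thesis using pos[of ?v] by simp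
qed

lemma herm_bf_swap: assumes "herm A" shows "bf A f g = cnj (bf A g f)"
proof -
  let ?n = "dim_row A"
  have "cnj (bf A g f) = (\<Sum>i<?n. \<Sum>j<?n. g i * cnj (A $$ (i,j)) * cnj (f j))"
    unfolding bf_def by simp
  also have "\<dots> = (\<Sum>i<?n. \<Sum>j<?n. g i * A $$ (j,i) * cnj (f j))"
  proof (intro sum.cong refl)
    fix i j assume "i \<in> {..<?n}" "j \<in> {..<?n}"
    hence "A $$ (j,i) = cnj (A $$ (i,j))" using assms(1) unfolding herm_def by blast
    thus "g i * cnj (A $$ (i,j)) * cnj (f j) = g i * A $$ (j,i) * cnj (f j)" by simp
  qed
  also have "\<dots> = bf A f g"
    unfolding bf_def by (subst sum.swap) (intro sum.cong refl, simp only: mult.commute mult.left_commute)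
  finally show ?thesis by simp
qed

lemma small_pos_zero: fixes a c :: real assumes a: "0 \<le> a" and h: "\<And>e. 0 < e \<Longrightarrow> 2 * e * a \<le> e * e * c"
  shows "a = 0"
proof (rule ccontr)
  assume "a \<noteq> 0" hence a0: "a > 0" using a by simp
  define e where "e = a / (\<bar>c\<bar> + 1)"
  have e0: "e > 0" unfolding e_def using a0 by (simp add: add_pos_nonneg)
  have "2 * e * a \<le> e * e * c" using h[OF e0] .
  hence "2 * a \<le> e * c" using e0 by (simp add: mult.assoc)
  also have "e * c \<le> e * \<bar>c\<bar>" using e0 by (simp add: mult_left_mono)
  also have "e * \<bar>c\<bar> < a" unfolding e_def using a0
    by (simp add: divide_less_eq field_simps)
  finally show False using a0 by simp
qed

lemma psd_null: assumes p: "psd A" and v: "dim_vec v = dim_row A" and q: "qf A v = 0"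
  shows "A *\<^sub>v v = 0\<^sub>v (dim_row A)"
proof -
  have h: "herm A" and sq: "dim_row A = dim_col A" using p unfolding psd_iff herm_def by blast+
  let ?n = "dim_row A"
  define g where "g i = (\<Sum>j<?n. A $$ (i,j) * v $ j)" for i
  have Av: "\<And>i. i < ?n \<Longrightarrow> (A *\<^sub>v v) $ i = g i" unfolding g_def using v sq by (simp add: mv_idx)
  define a where "a = (\<Sum>i<?n. cnj (g i) * g i)"
  have ra: "a = of_real (\<Sum>i<?n. (cmod (g i))^2)" unfolding a_def of_real_sum
    by (intro sum.cong refl) (simp only: complex_norm_square mult.commute)
  have b1: "bf A g (\<lambda>i. v $ i) = a" unfolding bf_def a_def g_def
    by (simp add: sum_distrib_left mult.assoc)
  have b2: "bf A (\<lambda>i. v $ i) g = a" using herm_bf_swap[OF h, of "(\<lambda>i. v $ i)" g] b1 ra by simp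
  have q0: "bf A (\<lambda>i. v $ i) (\<lambda>i. v $ i) = 0" using q qf_bf[OF sq v] by simp
  have ineq: "2 * e * Re a \<le> e * e * Re (bf A g g)" if e: "0 < e" for e :: real
  proof -
    have "0 \<le> Re (bf A (\<lambda>i. v $ i + complex_of_real (- e) * g i) (\<lambda>i. v $ i + complex_of_real (- e) * g i))"
      by (rule psd_bf_nonneg[OF p])
    also have "\<dots> = - 2 * e * Re a + e * e * Re (bf A g g)"
      unfolding bf_comb b1 b2 q0 by simp
    finally show ?thesis by simp
  qed
  have "Re a = 0"
    by (rule small_pos_zero[OF _ ineq]) (simp add: ra sum_nonneg)
  hence "(\<Sum>i<?n. (cmod (g i))^2) = 0" using ra by simp
  hence "\<forall>i\<in>{..<?n}. (cmod (g i))^2 = 0" by (subst (asm) sum_nonneg_eq_0_iff) auto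
  hence "\<And>i. i < ?n \<Longrightarrow> g i = 0" by auto
  thus ?thesis using Av sq by (intro eq_vecI) auto
qed


lemma mtrace_comm: assumes "A \<in> carrier_mat n m" "B \<in> carrier_mat m n"
  shows "mtrace (A * B) = mtrace (B * A)"
proof -
  have "mtrace (A * B) = (\<Sum>i<n. \<Sum>k<m. A $$ (i,k) * B $$ (k,i))"
    unfolding mtrace_def using assms by (intro sum.cong) (auto simp: mm_idx)
  also have "\<dots> = (\<Sum>k<m. \<Sum>i<n. B $$ (k,i) * A $$ (i,k))"
    by (subst sum.swap) (simp add: mult.commute)
  also have "\<dots> = mtrace (B * A)"
    unfolding mtrace_def using assms by (intro sum.cong) (auto simp: mm_idx)
  finally show ?thesis .
qed

lemma mtrace_add: "A \<in> carrier_mat n n \<Longrightarrow> B \<in> carrier_mat n n \<Longrightarrow> mtrace (A + B) = mtrace A + mtrace B"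
  unfolding mtrace_def by (simp add: sum.distrib)

lemma mtrace_zero[simp]: "mtrace (0\<^sub>m n n) = 0"
  unfolding mtrace_def by simp

lemma adj_carrier[simp]: "A \<in> carrier_mat n m \<Longrightarrow> adj A \<in> carrier_mat m n"
  by auto

lemma psd_carrier: "psd A \<Longrightarrow> A \<in> carrier_mat (dim_row A) (dim_row A)"
  unfolding psd_def carrier_mat_def by auto

lemma psd_herm: "psd A \<Longrightarrow> herm A" unfolding psd_iff by blast

lemma sandwich_trace: assumes A: "A \<in> carrier_mat n n" and D: "D \<in> carrier_mat n m"
  shows "mtrace (adj D * A * D) = (\<Sum>j<m. qf A (col D j))"
  unfolding mtrace_def
proof (intro sum.cong)
  fix j assume j: "j \<in> {..<m}"
  have "(adj D * A * D) $$ (j,j) = (\<Sum>k<n. (adj D * A) $$ (j,k) * D $$ (k,j))"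
    using A D j by (subst mm_idx) auto
  also have "\<dots> = (\<Sum>k<n. (\<Sum>i<n. cnj (D $$ (i,j)) * A $$ (i,k)) * D $$ (k,j))"
    using A D j by (intro sum.cong refl) (auto simp: mm_idx)
  also have "\<dots> = (\<Sum>i<n. cnj (D $$ (i,j)) * (\<Sum>k<n. A $$ (i,k) * D $$ (k,j)))"
    by (simp add: sum_distrib_left sum_distrib_right mult.assoc) (rule sum.swap)
  also have "\<dots> = qf A (col D j)"
    unfolding qf_def using A D j by (intro sum.cong refl) (auto simp: mv_idx)
  finally show "(adj D * A * D) $$ (j,j) = qf A (col D j)" .
qed (use D in auto)

lemma psd_qf_nonneg: "psd A \<Longrightarrow> dim_vec v = dim_row A \<Longrightarrow> 0 \<le> Re (qf A v)"
  unfolding psd_iff by blast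

lemma sandwich_nonneg: assumes A: "psd A" "A \<in> carrier_mat n n" and D: "D \<in> carrier_mat n m"
  shows "0 \<le> Re (mtrace (adj D * A * D))"
  unfolding sandwich_trace[OF A(2) D] Re_sum
  using A D by (intro sum_nonneg psd_qf_nonneg) auto

lemma sandwich_zero: assumes A: "psd A" "A \<in> carrier_mat n n" and D: "D \<in> carrier_mat n m"
  and z: "Re (mtrace (adj D * A * D)) = 0"
  shows "A * D = 0\<^sub>m n m"
proof -
  have nn: "\<And>j. j \<in> {..<m} \<Longrightarrow> 0 \<le> Re (qf A (col D j))"
    using A D by (intro psd_qf_nonneg) auto
  have "(\<Sum>j<m. Re (qf A (col D j))) = 0" using z unfolding sandwich_trace[OF A(2) D] Re_sum .
  hence z2: "\<forall>j\<in>{..<m}. Re (qf A (col D j)) = 0" using nn by (subst (asm) sum_nonneg_eq_0_iff) auto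
  have h: "herm A" using A(1) by (rule psd_herm)
  { fix j assume j: "j < m"
    have "Im (qf A (col D j)) = 0" using h A D by (intro herm_qf_Im) auto
    hence "qf A (col D j) = 0" using z2 j by (simp add: complex_eq_iff)
    hence "A *\<^sub>v col D j = 0\<^sub>v (dim_row A)" using A D by (intro psd_null) auto }
  note null = this
  show ?thesis
  proof (rule eq_matI)
    fix i j assume ij: "i < dim_row (0\<^sub>m n m)" "j < dim_col (0\<^sub>m n m)"
    have "(A * D) $$ (i,j) = (A *\<^sub>v col D j) $ i" using ij A D by simp
    also have "\<dots> = 0" using null[of j] ij A by simp
    finally show "(A * D) $$ (i,j) = 0\<^sub>m n m $$ (i,j)" using ij by simp
  qed (use A D in auto)
qed

lemma psd_one: "psd (1\<^sub>m n)"
proof -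
  have h: "herm (1\<^sub>m n)" unfolding herm_def by simp
  have p: "0 \<le> Re (qf (1\<^sub>m n) v)" if v: "dim_vec v = n" for v
  proof -
    have e: "1\<^sub>m n *\<^sub>v v = v" by (rule one_mult_mat_vec) (rule carrier_vecI[OF v])
    have "qf (1\<^sub>m n) v = (\<Sum>i<n. cnj (v $ i) * v $ i)" unfolding qf_def e by simp
    also have "\<dots> = of_real (\<Sum>i<n. (cmod (v $ i))^2)" unfolding of_real_sum
      by (intro sum.cong refl) (simp only: complex_norm_square mult.commute)
    finally show ?thesis by (simp add: sum_nonneg)
  qed
  show ?thesis unfolding psd_iff using h p by simp
qed

lemma adj_minus: "A \<in> carrier_mat n m \<Longrightarrow> B \<in> carrier_mat n m \<Longrightarrow> adj (A - B) = adj A - adj B"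
  by (intro eq_matI) auto

lemma psd_adj: "psd A \<Longrightarrow> adj A = A" unfolding psd_def by blast

lemma sqrt_unique: assumes B: "psd B" "B \<in> carrier_mat n n" and C: "psd C" "C \<in> carrier_mat n n"
  and eq: "B * B = C * C"
  shows "B = C"
proof -
  define D where "D = B - C"
  have Dc: "D \<in> carrier_mat n n" unfolding D_def using B C by auto
  have aD: "adj D = D" unfolding D_def using B C by (simp add: adj_minus psd_adj)
  have e1: "B * D + D * C = 0\<^sub>m n n"
  proof -
    have "B * D + D * C = (B * B - B * C) + (B * C - C * C)" unfolding D_def
      using B C by (simp add: mult_minus_distrib_mat[of _ n n] minus_mult_distrib_mat[of _ n n])
    also have "\<dots> = 0\<^sub>m n n" using B C eq by (intro eq_matI) auto
    finally show ?thesis .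
  qed
  have "mtrace (D * B * D) + mtrace (D * C * D) = mtrace (D * B * D) + mtrace (D * D * C)"
    using mtrace_comm[of "D * C" n n D] Dc C by simp
  also have "\<dots> = mtrace (D * (B * D + D * C))"
  proof -
    have "D * (B * D + D * C) = D * (B * D) + D * (D * C)"
      using B C Dc by (intro mult_add_distrib_mat[of _ n n]) auto
    hence "mtrace (D * (B * D + D * C)) = mtrace (D * (B * D)) + mtrace (D * (D * C))"
      using B C Dc by (simp add: mtrace_add[of _ n])
    thus ?thesis using B C Dc by simp
  qed
  also have "\<dots> = 0" using e1 Dc by simp
  finally have s0: "mtrace (adj D * B * D) + mtrace (adj D * C * D) = 0" unfolding aD .
  have n1: "0 \<le> Re (mtrace (adj D * B * D))" by (rule sandwich_nonneg[OF B Dc])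
  have n2: "0 \<le> Re (mtrace (adj D * C * D))" by (rule sandwich_nonneg[OF C Dc])
  have "Re (mtrace (adj D * B * D)) + Re (mtrace (adj D * C * D)) = 0"
    using arg_cong[OF s0, of Re] by simp
  hence z1: "Re (mtrace (adj D * B * D)) = 0" and z2: "Re (mtrace (adj D * C * D)) = 0"
    using n1 n2 by linarith+
  have BD: "B * D = 0\<^sub>m n n" by (rule sandwich_zero[OF B Dc z1])
  have CD: "C * D = 0\<^sub>m n n" by (rule sandwich_zero[OF C Dc z2])
  have "(B - C) * D = B * D - C * D" using B C Dc by (intro minus_mult_distrib_mat[of _ n n]) auto
  hence "D * D = B * D - C * D" unfolding D_def[symmetric] .
  also have "\<dots> = 0\<^sub>m n n" unfolding BD CD by (intro eq_matI) auto
  finally have DD: "D * D = 0\<^sub>m n n" .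
  have "Re (mtrace (adj D * 1\<^sub>m n * D)) = 0" unfolding aD using Dc DD by simp
  from sandwich_zero[OF psd_one one_carrier_mat Dc this] have "D = 0\<^sub>m n n" using Dc by simp
  show ?thesis
  proof (rule eq_matI)
    fix i j assume ij: "i < dim_row C" "j < dim_col C"
    have "D $$ (i,j) = 0" using \<open>D = 0\<^sub>m n n\<close> ij C by simp
    thus "B $$ (i,j) = C $$ (i,j)" unfolding D_def using ij by simp
  qed (use B C in auto)
qed


definition ipn :: "nat \<Rightarrow> complex vec \<Rightarrow> complex vec \<Rightarrow> complex" where
  "ipn n u v = (\<Sum>i<n. cnj (u $ i) * v $ i)"

lemma ipn_smult_right: "dim_vec v = n \<Longrightarrow> ipn n u (c \<cdot>\<^sub>v v) = c * ipn n u v"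
  unfolding ipn_def by (simp add: sum_distrib_left mult_ac)

lemma ipn_smult_left: "dim_vec u = n \<Longrightarrow> ipn n (c \<cdot>\<^sub>v u) v = cnj c * ipn n u v"
  unfolding ipn_def by (simp add: sum_distrib_left mult_ac)

lemma ipn_cnj: "cnj (ipn n u v) = ipn n v u"
  unfolding ipn_def by (simp add: mult.commute)

lemma ipn_self: "ipn n x x = of_real (\<Sum>i<n. (cmod (x $ i))^2)"
  unfolding ipn_def of_real_sum by (intro sum.cong refl) (simp only: complex_norm_square mult.commute)

lemma ipn_self_zero: assumes "x \<in> carrier_vec n" "ipn n x x = 0" shows "x = 0\<^sub>v n"
proof -
  have "of_real (\<Sum>i<n. (cmod (x $ i))^2) = (0::complex)" using assms(2) unfolding ipn_self .
  hence "(\<Sum>i<n. (cmod (x $ i))^2) = 0" by (simp only: of_real_eq_0_iff)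
  hence "\<forall>i\<in>{..<n}. (cmod (x $ i))^2 = 0" by (subst (asm) sum_nonneg_eq_0_iff) auto
  thus ?thesis using assms(1) by (intro eq_vecI) auto
qed

lemma qf_ipn: "dim_row A = n \<Longrightarrow> qf A v = ipn n v (A *\<^sub>v v)"
  unfolding qf_def ipn_def by simp

lemma herm_ipn: assumes h: "herm A" and A: "A \<in> carrier_mat n n" and u: "u \<in> carrier_vec n" and v: "v \<in> carrier_vec n"
  shows "ipn n u (A *\<^sub>v v) = ipn n (A *\<^sub>v u) v"
proof -
  have "ipn n u (A *\<^sub>v v) = (\<Sum>i<n. \<Sum>j<n. cnj (u $ i) * A $$ (i,j) * v $ j)"
    unfolding ipn_def using A v by (intro sum.cong refl) (simp add: sum_distrib_left mult.assoc)
  also have "\<dots> = (\<Sum>j<n. \<Sum>i<n. cnj (A $$ (j,i) * u $ i) * v $ j)"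
  proof (subst sum.swap, intro sum.cong refl)
    fix i j assume ij: "j \<in> {..<n}" "i \<in> {..<n}"
    hence ij': "i < dim_row A" "j < dim_row A" using A by auto
    have "A $$ (i,j) = cnj (A $$ (j,i))" using h ij' unfolding herm_def by blast
    thus "cnj (u $ i) * A $$ (i,j) * v $ j = cnj (A $$ (j,i) * u $ i) * v $ j" by simp
  qed
  also have "\<dots> = ipn n (A *\<^sub>v u) v"
    unfolding ipn_def using A u by (intro sum.cong refl) (simp add: sum_distrib_right)
  finally show ?thesis .
qed


lemma psd_gram: fixes w :: "nat \<Rightarrow> real" and f :: "nat \<Rightarrow> nat \<Rightarrow> complex"
  assumes w: "\<And>j. j < m \<Longrightarrow> 0 \<le> w j"
  shows "psd (mat n n (\<lambda>(a,b). \<Sum>j<m. of_real (w j) * f j a * cnj (f j b)))" (is "psd ?M")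
proof -
  have h: "herm ?M" unfolding herm_def by (simp add: mult_ac)
  have p: "0 \<le> Re (qf ?M v)" if v: "dim_vec v = n" for v
  proof -
    define z where "z j = (\<Sum>b<n. cnj (f j b) * v $ b)" for j
    have "qf ?M v = (\<Sum>a<n. \<Sum>b<n. cnj (v $ a) * ?M $$ (a,b) * v $ b)"
      using v by (subst qf_expand) auto
    also have "\<dots> = (\<Sum>a<n. \<Sum>b<n. \<Sum>j<m. of_real (w j) * ((cnj (v $ a) * f j a) * (cnj (f j b) * v $ b)))"
      by (intro sum.cong refl) (simp add: sum_distrib_left sum_distrib_right mult_ac)
    also have "\<dots> = (\<Sum>a<n. \<Sum>j<m. \<Sum>b<n. of_real (w j) * ((cnj (v $ a) * f j a) * (cnj (f j b) * v $ b)))"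
      by (rule sum.cong[OF refl], rule sum.swap)
    also have "\<dots> = (\<Sum>j<m. \<Sum>a<n. \<Sum>b<n. of_real (w j) * ((cnj (v $ a) * f j a) * (cnj (f j b) * v $ b)))"
      by (rule sum.swap)
    also have "\<dots> = (\<Sum>j<m. of_real (w j) * ((\<Sum>a<n. cnj (v $ a) * f j a) * (\<Sum>b<n. cnj (f j b) * v $ b)))"
      by (rule sum.cong[OF refl]) (simp only: sum_product, simp only: sum_distrib_left)
    also have "\<dots> = (\<Sum>j<m. of_real (w j * (cmod (z j))^2))"
    proof (intro sum.cong refl)
      fix j
      have e1: "(\<Sum>a<n. cnj (v $ a) * f j a) = cnj (z j)" unfolding z_def by (simp add: mult.commute)
      have e2: "cnj (z j) * z j = of_real ((cmod (z j))^2)" by (simp only: complex_norm_square mult.commute)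
      show "of_real (w j) * ((\<Sum>a<n. cnj (v $ a) * f j a) * (\<Sum>b<n. cnj (f j b) * v $ b)) = of_real (w j * (cmod (z j))^2)"
        unfolding e1 z_def[symmetric] e2 of_real_mult ..
    qed
    finally have "qf ?M v = of_real (\<Sum>j<m. w j * (cmod (z j))^2)" unfolding of_real_sum .
    moreover have "0 \<le> (\<Sum>j<m. w j * (cmod (z j))^2)" using w by (intro sum_nonneg) simp
    ultimately show ?thesis by simp
  qed
  show ?thesis unfolding psd_iff using h p by simp
qed


lemma ipn_add_right: "dim_vec v = n \<Longrightarrow> dim_vec w = n \<Longrightarrow> ipn n u (v + w) = ipn n u v + ipn n u w"
  unfolding ipn_def by (simp add: distrib_left sum.distrib)

lemma herm_trace_real: assumes h: "herm A" and A: "A \<in> carrier_mat n n"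
  shows "mtrace A = of_real (Re (mtrace A))"
proof -
  have "cnj (mtrace A) = mtrace A" unfolding mtrace_def
  proof (simp only: cnj_sum, intro sum.cong refl)
    fix i assume "i \<in> {..<dim_row A}"
    hence "A $$ (i,i) = cnj (A $$ (i,i))" using h unfolding herm_def by blast
    thus "cnj (A $$ (i,i)) = A $$ (i,i)" by simp
  qed
  hence "Im (mtrace A) = 0" by (metis Reals_cnj_iff complex_is_Real_iff)
  thus ?thesis by (simp add: complex_eq_iff)
qed

lemma trace_similar: assumes "similar_mat_wit C B P Q" "C \<in> carrier_mat n n"
  shows "mtrace C = mtrace B"
proof -
  from assms have c: "B \<in> carrier_mat n n" "P \<in> carrier_mat n n" "Q \<in> carrier_mat n n"
    and QP: "Q * P = 1\<^sub>m n" and CE: "C = P * B * Q"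
    unfolding similar_mat_wit_def Let_def by auto
  have "mtrace C = mtrace ((P * B) * Q)" using CE by simp
  also have "\<dots> = mtrace (Q * (P * B))" using c by (intro mtrace_comm[of _ n n]) auto
  also have "Q * (P * B) = (Q * P) * B" using c by simp
  also have "\<dots> = B" using QP c by simp
  finally show ?thesis .
qed

lemma trace_diag_mat: "B \<in> carrier_mat n n \<Longrightarrow> mtrace B = sum_list (diag_mat B)"
  unfolding mtrace_def diag_mat_def
  by (simp add: sum_set_upt_conv_sum_list_nat[symmetric] atLeast0LessThan)

lemma exists_other_eigenvalue: fixes C :: "complex mat" and t :: complex
  assumes C: "C \<in> carrier_mat n n" and tr: "mtrace C \<noteq> of_nat n * t"
  shows "\<exists>e. eigenvalue C e \<and> e \<noteq> t"
proof -
  obtain es where cp: "char_poly C = (\<Prod>a\<leftarrow>es. [:- a, 1:])" and len: "length es = n"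
    using char_poly_factorized[OF C] by blast
  obtain B P Q where sd: "schur_decomposition C es = (B,P,Q)" by (cases "schur_decomposition C es") auto
  from schur_decomposition[OF C cp sd] have sim: "similar_mat_wit C B P Q" and dg: "diag_mat B = es" by auto
  have Bc: "B \<in> carrier_mat n n" using sim C unfolding similar_mat_wit_def Let_def by auto
  have trC: "mtrace C = sum_list es" using trace_similar[OF sim C] trace_diag_mat[OF Bc] dg by simp
  have "\<exists>e\<in>set es. e \<noteq> t"
  proof (rule ccontr)
    assume "\<not> (\<exists>e\<in>set es. e \<noteq> t)"
    hence "map (\<lambda>_. t) es = es" by (intro map_idI) auto
    hence "sum_list es = of_nat n * t" using len by (metis sum_list_triv)
    with tr trC show False by simp
  qed
  then obtain e where e: "e \<in> set es" "e \<noteq> t" by blast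
  have "poly (char_poly C) e = 0" unfolding cp poly_prod_list prod_list_zero_iff
    using e(1) by (auto simp: image_iff intro!: bexI[of _ "[:- e, 1:]"])
  hence "eigenvalue C e" using eigenvalue_root_char_poly[OF C] by simp
  thus ?thesis using e by blast
qed


lemma extend_eig:
  assumes h: "herm A" and A: "A \<in> carrier_mat n n" and k: "k < n"
  and u: "\<And>j. j < k \<Longrightarrow> u j \<in> carrier_vec n \<and> A *\<^sub>v u j = of_real (lam j) \<cdot>\<^sub>v u j"
  and on: "\<And>j l. j < k \<Longrightarrow> l < k \<Longrightarrow> ipn n (u j) (u l) = (if j = l then 1 else 0)"
  shows "\<exists>x mu. x \<in> carrier_vec n \<and> A *\<^sub>v x = of_real mu \<cdot>\<^sub>v x \<and> ipn n x x = 1 \<and> (\<forall>j<k. ipn n (u j) x = 0)"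
proof -
  have uc: "\<And>j. j < k \<Longrightarrow> u j \<in> carrier_vec n" using u by blast
  have ue: "\<And>j. j < k \<Longrightarrow> A *\<^sub>v u j = of_real (lam j) \<cdot>\<^sub>v u j" using u by blast
  define c where "c = Re (mtrace A) - (\<Sum>j<k. lam j)"
  define t where "t = c / real (n - k) + 1"
  define M where "M = mat n n (\<lambda>(a,b). \<Sum>j<k. of_real (t - lam j) * u j $ a * cnj (u j $ b))"
  define C where "C = A + M"
  have Mc: "M \<in> carrier_mat n n" unfolding M_def by simp
  have Cc: "C \<in> carrier_mat n n" unfolding C_def using A Mc by simp
  have trM: "mtrace M = of_real (\<Sum>j<k. t - lam j)"
  proof -
    have "mtrace M = (\<Sum>a<n. \<Sum>j<k. of_real (t - lam j) * (cnj (u j $ a) * u j $ a))"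
      unfolding mtrace_def M_def by (simp add: mult_ac)
    also have "\<dots> = (\<Sum>j<k. of_real (t - lam j) * ipn n (u j) (u j))"
      unfolding ipn_def by (subst sum.swap) (simp add: sum_distrib_left)
    also have "\<dots> = (\<Sum>j<k. of_real (t - lam j))" using on by simp
    finally show ?thesis by simp
  qed
  have trC: "mtrace C = of_real (c + real k * t)"
  proof -
    have "mtrace C = mtrace A + mtrace M" unfolding C_def using A Mc by (rule mtrace_add)
    also have "mtrace A = of_real (Re (mtrace A))" by (rule herm_trace_real[OF h A])
    finally have e1: "mtrace C = of_real (Re (mtrace A)) + mtrace M" .
    have "(\<Sum>j<k. t - lam j) = real k * t - (\<Sum>j<k. lam j)" by (simp add: sum_subtractf)
    thus ?thesis unfolding e1 trM c_def by simp
  qed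
  have nk: "real (n - k) > 0" using k by simp
  have "mtrace C \<noteq> of_nat n * of_real t"
  proof
    assume "mtrace C = of_nat n * of_real t"
    hence "c + real k * t = real n * t" unfolding trC by (metis of_real_eq_iff of_real_mult of_real_of_nat_eq)
    hence "real (n - k) * t = c" using k by (simp add: of_nat_diff algebra_simps)
    moreover have "real (n - k) * t = c + real (n - k)" unfolding t_def using nk by (simp add: field_simps)
    ultimately show False using nk by simp
  qed
  then obtain e where ev: "eigenvalue C e" and et: "e \<noteq> of_real t"
    using exists_other_eigenvalue[OF Cc] by blast
  then obtain x where x: "x \<in> carrier_vec n" "x \<noteq> 0\<^sub>v n" "C *\<^sub>v x = e \<cdot>\<^sub>v x"
    unfolding eigenvalue_def eigenvector_def using Cc by auto
  have Mv: "(M *\<^sub>v y) $ a = (\<Sum>l<k. of_real (t - lam l) * u l $ a * ipn n (u l) y)"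
    if y: "y \<in> carrier_vec n" and a: "a < n" for y a
  proof -
    have "(M *\<^sub>v y) $ a = (\<Sum>b<n. M $$ (a,b) * y $ b)" using y a Mc by (subst mv_idx) auto
    also have "\<dots> = (\<Sum>b<n. (\<Sum>l<k. of_real (t - lam l) * u l $ a * cnj (u l $ b)) * y $ b)"
      using a by (intro sum.cong refl) (simp add: M_def)
    also have "\<dots> = (\<Sum>l<k. of_real (t - lam l) * u l $ a * ipn n (u l) y)"
      unfolding ipn_def by (simp add: sum_distrib_left sum_distrib_right mult_ac sum.swap[of _ "{..<n}"])
    finally show ?thesis .
  qed
  have ipM: "ipn n (u j) (M *\<^sub>v y) = of_real (t - lam j) * ipn n (u j) y"
    if y: "y \<in> carrier_vec n" and j: "j < k" for y j
  proof -
    have "ipn n (u j) (M *\<^sub>v y) = (\<Sum>a<n. cnj (u j $ a) * (M *\<^sub>v y) $ a)" by (simp only: ipn_def)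
    also have "\<dots> = (\<Sum>a<n. cnj (u j $ a) * (\<Sum>l<k. of_real (t - lam l) * u l $ a * ipn n (u l) y))"
      by (intro sum.cong refl) (simp add: Mv[OF y])
    also have "\<dots> = (\<Sum>l<k. of_real (t - lam l) * ipn n (u j) (u l) * ipn n (u l) y)"
      unfolding ipn_def[of n "u j" "u _"] by (simp add: sum_distrib_left sum_distrib_right mult_ac sum.swap[of _ "{..<n}"])
    also have "\<dots> = (\<Sum>l<k. if l = j then of_real (t - lam j) * ipn n (u j) y else 0)"
      using j by (intro sum.cong refl) (simp add: on)
    also have "\<dots> = of_real (t - lam j) * ipn n (u j) y" using j by simp
    finally show ?thesis .
  qed
  have ipA: "ipn n (u j) (A *\<^sub>v y) = of_real (lam j) * ipn n (u j) y"
    if y: "y \<in> carrier_vec n" and j: "j < k" for y j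
  proof -
    have "ipn n (u j) (A *\<^sub>v y) = ipn n (A *\<^sub>v u j) y" using herm_ipn[OF h A uc[OF j] y] .
    also have "\<dots> = ipn n (of_real (lam j) \<cdot>\<^sub>v u j) y" using ue[OF j] by simp
    also have "\<dots> = of_real (lam j) * ipn n (u j) y" using uc[OF j] by (simp add: ipn_smult_left)
    finally show ?thesis .
  qed
  have orth: "ipn n (u j) x = 0" if j: "j < k" for j
  proof -
    have "C *\<^sub>v x = A *\<^sub>v x + M *\<^sub>v x" unfolding C_def using A Mc x(1) by (rule add_mult_distrib_mat_vec)
    hence "ipn n (u j) (C *\<^sub>v x) = ipn n (u j) (A *\<^sub>v x) + ipn n (u j) (M *\<^sub>v x)"
      using A Mc x(1) by (simp add: ipn_add_right)
    also have "\<dots> = of_real t * ipn n (u j) x" using ipA[OF x(1) j] ipM[OF x(1) j] by (simp add: algebra_simps)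
    finally have "e * ipn n (u j) x = of_real t * ipn n (u j) x" using x(3) x(1) by (simp add: ipn_smult_right)
    thus ?thesis using et by simp
  qed
  have Mx0: "M *\<^sub>v x = 0\<^sub>v n"
  proof (rule eq_vecI)
    fix a assume "a < dim_vec (0\<^sub>v n :: complex vec)"
    hence a: "a < n" by simp
    show "(M *\<^sub>v x) $ a = 0\<^sub>v n $ a" using Mv[OF x(1) a] orth a by simp
  qed (use Mc in simp)
  have Ax: "A *\<^sub>v x = e \<cdot>\<^sub>v x"
  proof -
    have "C *\<^sub>v x = A *\<^sub>v x + M *\<^sub>v x" unfolding C_def using A Mc x(1) by (rule add_mult_distrib_mat_vec)
    also have "\<dots> = A *\<^sub>v x" unfolding Mx0 using A x(1) by simp
    finally show ?thesis using x(3) by simp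
  qed
  have xx0: "ipn n x x \<noteq> 0" using ipn_self_zero[OF x(1)] x(2) by blast
  have "ipn n x (A *\<^sub>v x) = ipn n (A *\<^sub>v x) x" using herm_ipn[OF h A x(1) x(1)] .
  hence "e * ipn n x x = cnj e * ipn n x x" unfolding Ax using x(1) by (simp add: ipn_smult_left ipn_smult_right)
  hence ee: "cnj e = e" using xx0 by simp
  define mu where "mu = Re e"
  have emu: "e = of_real mu" unfolding mu_def using ee by (metis Reals_cnj_iff complex_is_Real_iff of_real_Re)
  define r where "r = (\<Sum>i<n. (cmod (x $ i))^2)"
  have xr: "ipn n x x = of_real r" unfolding r_def by (rule ipn_self)
  have r0: "r > 0"
  proof -
    have "r \<ge> 0" unfolding r_def by (simp add: sum_nonneg)
    moreover have "r \<noteq> 0" using xx0 xr by auto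
    ultimately show ?thesis by simp
  qed
  define s where "s = 1 / sqrt r"
  define y where "y = of_real s \<cdot>\<^sub>v x"
  have yc: "y \<in> carrier_vec n" unfolding y_def using x(1) by simp
  have Ay: "A *\<^sub>v y = of_real mu \<cdot>\<^sub>v y"
    unfolding y_def using A x(1) by (simp add: mult_mat_vec[OF A x(1)] Ax emu smult_smult_assoc mult.commute)
  have yy: "ipn n y y = 1"
  proof -
    have "ipn n y y = of_real s * of_real s * ipn n x x" unfolding y_def using x(1)
      by (simp add: ipn_smult_left ipn_smult_right)
    also have "\<dots> = of_real (s * s * r)" unfolding xr by simp
    also have "s * s * r = 1" unfolding s_def using r0 by (simp add: field_simps)
    finally show ?thesis by simp
  qed
  have yo: "\<forall>j<k. ipn n (u j) y = 0" unfolding y_def using x(1) orth by (simp add: ipn_smult_right)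
  show ?thesis using yc Ay yy yo by blast
qed


lemma eig_family:
  assumes h: "herm A" and A: "A \<in> carrier_mat n n"
  shows "k \<le> n \<Longrightarrow> \<exists>u lam. (\<forall>j<k. u j \<in> carrier_vec n \<and> A *\<^sub>v u j = of_real (lam j) \<cdot>\<^sub>v u j) \<and>
     (\<forall>j<k. \<forall>l<k. ipn n (u j) (u l) = (if j = l then 1 else 0))"
proof (induction k)
  case 0 show ?case by auto
next
  case (Suc k)
  then obtain u lam where u: "\<forall>j<k. u j \<in> carrier_vec n \<and> A *\<^sub>v u j = of_real (lam j) \<cdot>\<^sub>v u j"
    and on: "\<forall>j<k. \<forall>l<k. ipn n (u j) (u l) = (if j = l then 1 else 0)" by auto
  have k: "k < n" using Suc by simp
  obtain x mu where x: "x \<in> carrier_vec n" "A *\<^sub>v x = of_real mu \<cdot>\<^sub>v x" "ipn n x x = 1"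
    and xo: "\<forall>j<k. ipn n (u j) x = 0"
    using extend_eig[OF h A k, of u lam] u on by blast
  define u' where "u' = u(k := x)"
  define lam' where "lam' = lam(k := mu)"
  have "\<forall>j<Suc k. u' j \<in> carrier_vec n \<and> A *\<^sub>v u' j = of_real (lam' j) \<cdot>\<^sub>v u' j"
    unfolding u'_def lam'_def using u x by (auto simp: less_Suc_eq)
  moreover have "\<forall>j<Suc k. \<forall>l<Suc k. ipn n (u' j) (u' l) = (if j = l then 1 else 0)"
  proof (intro allI impI)
    fix j l assume j: "j < Suc k" and l: "l < Suc k"
    show "ipn n (u' j) (u' l) = (if j = l then 1 else 0)"
    proof (cases "j = k")
      case True
      show ?thesis
      proof (cases "l = k")
        case True thus ?thesis using \<open>j = k\<close> x(3) unfolding u'_def by simp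
      next
        case False
        hence "l < k" using l by simp
        hence "ipn n x (u l) = 0" using xo ipn_cnj[of n "u l" x] by (metis complex_cnj_zero)
        thus ?thesis using \<open>j = k\<close> False unfolding u'_def by simp
      qed
    next
      case False
      hence jk: "j < k" using j by simp
      show ?thesis
      proof (cases "l = k")
        case True thus ?thesis using xo jk False unfolding u'_def by simp
      next
        case False
        hence "l < k" using l by simp
        thus ?thesis using on jk \<open>j \<noteq> k\<close> False unfolding u'_def by simp
      qed
    qed
  qed
  ultimately show ?case by blast
qed

lemma sqrt_exists: assumes p: "psd A" and A: "A \<in> carrier_mat n n"
  shows "\<exists>B. psd B \<and> B \<in> carrier_mat n n \<and> B * B = A"
proof -
  have h: "herm A" using p by (rule psd_herm)
  obtain u lam where u: "\<forall>j<n. u j \<in> carrier_vec n \<and> A *\<^sub>v u j = of_real (lam j) \<cdot>\<^sub>v u j"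
    and on: "\<forall>j<n. \<forall>l<n. ipn n (u j) (u l) = (if j = l then 1 else 0)"
    using eig_family[OF h A, of n] by auto
  have uc: "\<And>j. j < n \<Longrightarrow> u j \<in> carrier_vec n" and ue: "\<And>j. j < n \<Longrightarrow> A *\<^sub>v u j = of_real (lam j) \<cdot>\<^sub>v u j"
    using u by auto
  have lam0: "0 \<le> lam j" if j: "j < n" for j
  proof -
    have "qf A (u j) = ipn n (u j) (A *\<^sub>v u j)" using A by (intro qf_ipn) auto
    also have "\<dots> = of_real (lam j)" using ue[OF j] uc[OF j] on j by (simp add: ipn_smult_right)
    finally show ?thesis using psd_qf_nonneg[OF p, of "u j"] uc[OF j] A by simp
  qed
  define U where "U = mat n n (\<lambda>(a,j). u j $ a)"
  have Uc: "U \<in> carrier_mat n n" unfolding U_def by simp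
  have UU1: "adj U * U = 1\<^sub>m n"
  proof (rule eq_matI)
    fix j l assume jl: "j < dim_row (1\<^sub>m n :: complex mat)" "l < dim_col (1\<^sub>m n :: complex mat)"
    hence "(adj U * U) $$ (j,l) = (\<Sum>a<n. cnj (u j $ a) * u l $ a)" using Uc
      by (subst mm_idx) (auto simp: U_def intro!: sum.cong)
    also have "\<dots> = ipn n (u j) (u l)" unfolding ipn_def ..
    finally show "(adj U * U) $$ (j,l) = 1\<^sub>m n $$ (j,l)" using on jl by simp
  qed (use Uc in auto)
  have e: "U * adj U = 1\<^sub>m n" using Uc by (rule mat_mult_left_right_inverse[OF adj_carrier[OF Uc] _ UU1])
  have comp: "(\<Sum>j<n. u j $ a * cnj (u j $ b)) = (if a = b then 1 else 0)" if ab: "a < n" "b < n" for a b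
  proof -
    have "(U * adj U) $$ (a,b) = (\<Sum>j<n. u j $ a * cnj (u j $ b))" using Uc ab
      by (subst mm_idx) (auto simp: U_def intro!: sum.cong)
    thus ?thesis using e ab by simp
  qed
  define B where "B = mat n n (\<lambda>(a,b). \<Sum>j<n. of_real (sqrt (lam j)) * (\<lambda>j a. u j $ a) j a * cnj ((\<lambda>j a. u j $ a) j b))"
  have pB: "psd B" unfolding B_def by (rule psd_gram) (simp add: lam0)
  have Bc: "B \<in> carrier_mat n n" unfolding B_def by simp
  have "B * B = A"
  proof (rule eq_matI)
    fix a b assume ab: "a < dim_row A" "b < dim_col A"
    hence a: "a < n" and b: "b < n" using A by auto
    let ?s = "\<lambda>j. complex_of_real (sqrt (lam j))"
    let ?F = "\<lambda>c j l. ?s j * u j $ a * cnj (u j $ c) * (?s l * u l $ c * cnj (u l $ b))"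
    have "(B * B) $$ (a,b) = (\<Sum>c<n. B $$ (a,c) * B $$ (c,b))" using Bc a b by (subst mm_idx) auto
    also have "\<dots> = (\<Sum>c<n. (\<Sum>j<n. ?s j * u j $ a * cnj (u j $ c)) * (\<Sum>l<n. ?s l * u l $ c * cnj (u l $ b)))"
      using a b by (intro sum.cong refl) (simp add: B_def)
    also have "\<dots> = (\<Sum>c<n. \<Sum>j<n. \<Sum>l<n. ?F c j l)" by (simp only: sum_product)
    also have "\<dots> = (\<Sum>j<n. \<Sum>c<n. \<Sum>l<n. ?F c j l)" by (rule sum.swap)
    also have "\<dots> = (\<Sum>j<n. \<Sum>l<n. \<Sum>c<n. ?F c j l)" by (rule sum.cong[OF refl], rule sum.swap)
    also have "\<dots> = (\<Sum>j<n. \<Sum>l<n. ?s j * ?s l * u j $ a * cnj (u l $ b) * ipn n (u j) (u l))"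
      unfolding ipn_def by (intro sum.cong refl) (simp add: sum_distrib_left mult_ac)
    also have "\<dots> = (\<Sum>j<n. \<Sum>l<n. if j = l then of_real (lam j) * u j $ a * cnj (u j $ b) else 0)"
    proof (intro sum.cong refl)
      fix j l assume jl: "j \<in> {..<n}" "l \<in> {..<n}"
      show "?s j * ?s l * u j $ a * cnj (u l $ b) * ipn n (u j) (u l) =
        (if j = l then of_real (lam j) * u j $ a * cnj (u j $ b) else 0)"
      proof (cases "j = l")
        case True
        have "?s j * ?s j = of_real (lam j)" using lam0[of j] jl by (simp flip: of_real_mult)
        thus ?thesis using True on jl by simp
      qed (use on jl in simp)
    qed
    also have "\<dots> = (\<Sum>j<n. of_real (lam j) * u j $ a * cnj (u j $ b))" by simp
    finally have BB: "(B * B) $$ (a,b) = (\<Sum>j<n. of_real (lam j) * u j $ a * cnj (u j $ b))" .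
    have "(\<Sum>c<n. A $$ (a,c) * (if c = b then 1 else 0)) = (\<Sum>c<n. if c = b then A $$ (a,c) else 0)"
      by (intro sum.cong) auto
    also have "\<dots> = A $$ (a,b)" using b by (simp add: sum.delta)
    finally have "A $$ (a,b) = (\<Sum>c<n. A $$ (a,c) * (if c = b then 1 else 0))" ..
    also have "\<dots> = (\<Sum>c<n. A $$ (a,c) * (\<Sum>j<n. u j $ c * cnj (u j $ b)))"
      using b by (intro sum.cong refl) (simp add: comp)
    also have "\<dots> = (\<Sum>c<n. \<Sum>j<n. A $$ (a,c) * u j $ c * cnj (u j $ b))"
      by (simp only: sum_distrib_left mult.assoc)
    also have "\<dots> = (\<Sum>j<n. \<Sum>c<n. A $$ (a,c) * u j $ c * cnj (u j $ b))"
      by (rule sum.swap)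
    also have "\<dots> = (\<Sum>j<n. (\<Sum>c<n. A $$ (a,c) * u j $ c) * cnj (u j $ b))"
      by (simp only: sum_distrib_right)
    also have "\<dots> = (\<Sum>j<n. (A *\<^sub>v u j) $ a * cnj (u j $ b))"
      using A a uc by (intro sum.cong refl) (simp add: mv_idx)
    also have "\<dots> = (\<Sum>j<n. of_real (lam j) * u j $ a * cnj (u j $ b))"
    proof (intro sum.cong refl)
      fix j assume "j \<in> {..<n}"
      hence j: "j < n" by simp
      have d: "dim_vec (u j) = n" using uc[OF j] by simp
      show "(A *\<^sub>v u j) $ a * cnj (u j $ b) = of_real (lam j) * u j $ a * cnj (u j $ b)"
        unfolding ue[OF j] using d a by simp
    qed
    finally show "(B * B) $$ (a,b) = A $$ (a,b)" using BB by simp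
  qed (use A Bc in auto)
  thus ?thesis using pB Bc by blast
qed


lemma msqrt_eq: assumes B: "psd B" "dim_row B = dim_row A" "B * B = A"
  shows "msqrt A = B"
  unfolding msqrt_def
proof (rule the_equality)
  show "psd B \<and> dim_row B = dim_row A \<and> B * B = A" using B by blast
next
  fix C assume C: "psd C \<and> dim_row C = dim_row A \<and> C * C = A"
  hence C': "psd C" "dim_row C = dim_row A" "C * C = A" by auto
  have Bc: "B \<in> carrier_mat (dim_row A) (dim_row A)" using psd_carrier[OF B(1)] B(2) by simp
  have Cc: "C \<in> carrier_mat (dim_row A) (dim_row A)" using psd_carrier[OF C'(1)] C'(2) by simp
  show "C = B" using sqrt_unique[OF C'(1) Cc B(1) Bc] C'(3) B(3) by simp
qed

lemma msqrt_props: assumes p: "psd A"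
  shows "psd (msqrt A)" "msqrt A \<in> carrier_mat (dim_row A) (dim_row A)" "msqrt A * msqrt A = A"
proof -
  obtain B where B: "psd B" "B \<in> carrier_mat (dim_row A) (dim_row A)" "B * B = A"
    using sqrt_exists[OF p psd_carrier[OF p]] by blast
  have "msqrt A = B" using B by (intro msqrt_eq) auto
  thus "psd (msqrt A)" "msqrt A \<in> carrier_mat (dim_row A) (dim_row A)" "msqrt A * msqrt A = A" using B by auto
qed

lemma sum_split: "(\<Sum>s<a*b. g s) = (\<Sum>i<a. \<Sum>j<b. g (i*b+j :: nat))"
proof (induction a)
  case 0 show ?case by simp
next
  case (Suc a)
  have "(\<Sum>s<Suc a * b. g s) = (\<Sum>s<a*b. g s) + (\<Sum>s\<in>{a*b..<a*b+b}. g s)"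
    by (simp add: sum.atLeastLessThan_concat[symmetric] lessThan_atLeast0 add.commute)
  also have "(\<Sum>s\<in>{a*b..<a*b+b}. g s) = (\<Sum>j<b. g (a*b+j))"
    by (rule sum.reindex_bij_witness[where i="\<lambda>j. a*b+j" and j="\<lambda>s. s - a*b"]) auto
  finally show ?case using Suc by simp
qed

lemma idx_lt: "i < a \<Longrightarrow> j < (b::nat) \<Longrightarrow> i * b + j < a * b"
proof -
  assume "i < a" "j < b"
  hence "i * b + j < i * b + b" by simp
  also have "\<dots> = Suc i * b" by simp
  also have "\<dots> \<le> a * b" using \<open>i < a\<close> by (intro mult_le_mono1) simp
  finally show ?thesis .
qed

lemma idx_div[simp]: "j < (b::nat) \<Longrightarrow> (i * b + j) div b = i" by simp
lemma idx_mod[simp]: "j < (b::nat) \<Longrightarrow> (i * b + j) mod b = j" by simp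

lemma tensor_dims[simp]: "dim_row (tensor X Y) = dim_row X * dim_row Y" "dim_col (tensor X Y) = dim_col X * dim_col Y"
  unfolding tensor_def by auto

lemma tensor_carrier: "X \<in> carrier_mat a a \<Longrightarrow> Y \<in> carrier_mat b b \<Longrightarrow> tensor X Y \<in> carrier_mat (a*b) (a*b)"
  unfolding carrier_mat_def by auto

lemma tensor_idx: assumes "X \<in> carrier_mat a a" "Y \<in> carrier_mat b b" "i < a" "j < b" "i' < a" "j' < b"
  shows "tensor X Y $$ (i*b+j, i'*b+j') = X $$ (i,i') * Y $$ (j,j')"
  using assms idx_lt[of i a j b] idx_lt[of i' a j' b] unfolding tensor_def by auto

lemma tensor_mult: assumes X: "X \<in> carrier_mat a a" and Z: "Z \<in> carrier_mat a a"
  and Y: "Y \<in> carrier_mat b b" and W: "W \<in> carrier_mat b b"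
  shows "tensor X Y * tensor Z W = tensor (X * Z) (Y * W)"
proof (rule eq_matI)
  fix r c assume rc: "r < dim_row (tensor (X * Z) (Y * W))" "c < dim_col (tensor (X * Z) (Y * W))"
  hence r: "r < a*b" and c: "c < a*b" using X Y Z W by auto
  hence b0: "b > 0" by (cases b) auto
  have ri: "r div b < a" using r by (simp add: less_mult_imp_div_less)
  have ci: "c div b < a" using c by (simp add: less_mult_imp_div_less)
  have rj: "r mod b < b" and cj: "c mod b < b" using b0 by auto
  have "(tensor X Y * tensor Z W) $$ (r,c) = (\<Sum>s<a*b. tensor X Y $$ (r,s) * tensor Z W $$ (s,c))"
    using r c X Y Z W by (subst mm_idx) auto
  also have "\<dots> = (\<Sum>i<a. \<Sum>j<b. tensor X Y $$ (r, i*b+j) * tensor Z W $$ (i*b+j, c))"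
    by (rule sum_split)
  also have "\<dots> = (\<Sum>i<a. \<Sum>j<b. (X $$ (r div b, i) * Z $$ (i, c div b)) * (Y $$ (r mod b, j) * W $$ (j, c mod b)))"
  proof (intro sum.cong refl)
    fix i j assume ij: "i \<in> {..<a}" "j \<in> {..<b}"
    have "tensor X Y $$ (r, i*b+j) = X $$ (r div b, i) * Y $$ (r mod b, j)"
      using r ij X Y idx_lt[of i a j b] unfolding tensor_def by auto
    moreover have "tensor Z W $$ (i*b+j, c) = Z $$ (i, c div b) * W $$ (j, c mod b)"
      using c ij Z W idx_lt[of i a j b] unfolding tensor_def by auto
    ultimately show "tensor X Y $$ (r, i*b+j) * tensor Z W $$ (i*b+j, c) =
      (X $$ (r div b, i) * Z $$ (i, c div b)) * (Y $$ (r mod b, j) * W $$ (j, c mod b))" by (simp add: mult_ac)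
  qed
  also have "\<dots> = (\<Sum>i<a. X $$ (r div b, i) * Z $$ (i, c div b)) * (\<Sum>j<b. Y $$ (r mod b, j) * W $$ (j, c mod b))"
    by (simp only: sum_product)
  also have "\<dots> = (X * Z) $$ (r div b, c div b) * (Y * W) $$ (r mod b, c mod b)"
    using X Y Z W ri ci rj cj by (simp add: mm_idx)
  also have "\<dots> = tensor (X * Z) (Y * W) $$ (r,c)"
    using X Y Z W r c unfolding tensor_def by auto
  finally show "(tensor X Y * tensor Z W) $$ (r,c) = tensor (X * Z) (Y * W) $$ (r,c)" .
qed (use X Y Z W in auto)

lemma tensor_adj: assumes X: "X \<in> carrier_mat a a" and Y: "Y \<in> carrier_mat b b"
  shows "adj (tensor X Y) = tensor (adj X) (adj Y)"
proof (rule eq_matI)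
  fix r c assume rc: "r < dim_row (tensor (adj X) (adj Y))" "c < dim_col (tensor (adj X) (adj Y))"
  hence r: "r < a*b" and c: "c < a*b" using X Y by auto
  hence b0: "b > 0" by (cases b) auto
  have ri: "r div b < a" using r by (simp add: less_mult_imp_div_less)
  have ci: "c div b < a" using c by (simp add: less_mult_imp_div_less)
  have rj: "r mod b < b" and cj: "c mod b < b" using b0 by auto
  show "adj (tensor X Y) $$ (r,c) = tensor (adj X) (adj Y) $$ (r,c)"
    using X Y r c ri ci rj cj unfolding tensor_def adj_def by auto
qed (use X Y in auto)

lemma psd_mult_adj: assumes T: "T \<in> carrier_mat n m" shows "psd (T * adj T)"
proof -
  have "T * adj T = mat n n (\<lambda>(a,b). \<Sum>j<m. of_real 1 * T $$ (a,j) * cnj (T $$ (b,j)))"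
  proof (rule eq_matI)
    fix a b assume ab: "a < dim_row (mat n n (\<lambda>(a,b). \<Sum>j<m. of_real 1 * T $$ (a,j) * cnj (T $$ (b,j))))"
       "b < dim_col (mat n n (\<lambda>(a,b). \<Sum>j<m. of_real 1 * T $$ (a,j) * cnj (T $$ (b,j))))"
    hence a: "a < n" and b: "b < n" by auto
    have "(T * adj T) $$ (a,b) = (\<Sum>j<m. T $$ (a,j) * adj T $$ (j,b))" using T a b by (subst mm_idx) auto
    also have "\<dots> = (\<Sum>j<m. T $$ (a,j) * cnj (T $$ (b,j)))" using T b by (intro sum.cong refl) auto
    finally show "(T * adj T) $$ (a,b) = mat n n (\<lambda>(a,b). \<Sum>j<m. of_real 1 * T $$ (a,j) * cnj (T $$ (b,j))) $$ (a,b)"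
      using a b by simp
  qed (use T in auto)
  also have "psd \<dots>" by (rule psd_gram) simp
  finally show ?thesis .
qed

lemma psd_tensor: assumes X: "psd X" "X \<in> carrier_mat a a" and Y: "psd Y" "Y \<in> carrier_mat b b"
  shows "psd (tensor X Y)"
proof -
  define K where "K = msqrt X"
  define L where "L = msqrt Y"
  have K: "psd K" "K \<in> carrier_mat a a" "K * K = X" unfolding K_def using msqrt_props[OF X(1)] X(2) by auto
  have L: "psd L" "L \<in> carrier_mat b b" "L * L = Y" unfolding L_def using msqrt_props[OF Y(1)] Y(2) by auto
  have "tensor X Y = tensor (K * adj K) (L * adj L)" using K L by (simp add: psd_adj)
  also have "\<dots> = tensor K L * tensor (adj K) (adj L)" using K L by (simp add: tensor_mult[of _ a _ _ b])
  also have "\<dots> = tensor K L * adj (tensor K L)" using K L by (simp add: tensor_adj[of _ a _ b])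
  finally show ?thesis using psd_mult_adj[OF tensor_carrier[OF K(2) L(2)]] by simp
qed


lemma tensor_mv: assumes X: "X \<in> carrier_mat a a" and Y: "Y \<in> carrier_mat b b"
  and v: "dim_vec v = a * b" and r: "r < a * b"
  shows "(tensor X Y *\<^sub>v v) $ r = (\<Sum>i'<a. \<Sum>j'<b. X $$ (r div b, i') * Y $$ (r mod b, j') * v $ (i'*b+j'))"
proof -
  have b0: "b > 0" using r by (cases b) auto
  have "(tensor X Y *\<^sub>v v) $ r = (\<Sum>c<a*b. tensor X Y $$ (r,c) * v $ c)"
    using X Y v r by (subst mv_idx) auto
  also have "\<dots> = (\<Sum>i'<a. \<Sum>j'<b. tensor X Y $$ (r, i'*b+j') * v $ (i'*b+j'))" by (rule sum_split)
  also have "\<dots> = (\<Sum>i'<a. \<Sum>j'<b. X $$ (r div b, i') * Y $$ (r mod b, j') * v $ (i'*b+j'))"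
  proof (intro sum.cong refl)
    fix i' j' assume ij: "i' \<in> {..<a}" "j' \<in> {..<b}"
    show "tensor X Y $$ (r, i'*b+j') * v $ (i'*b+j') = X $$ (r div b, i') * Y $$ (r mod b, j') * v $ (i'*b+j')"
      using r ij X Y idx_lt[of i' a j' b] unfolding tensor_def by auto
  qed
  finally show ?thesis .
qed

lemma proj_idx: "i < dim_vec v \<Longrightarrow> j < dim_vec v \<Longrightarrow> proj v $$ (i,j) = v $ i * cnj (v $ j)"
  unfolding proj_def by simp

lemma proj_carrier: "proj v \<in> carrier_mat (dim_vec v) (dim_vec v)"
  unfolding proj_def by simp

lemma sum_lt1: "(\<Sum>j<(1::nat). f j) = f 0"
  by (simp add: lessThan_Suc)

lemma proj_psd: "psd (proj v)"
proof -
  have "proj v = mat (dim_vec v) (dim_vec v) (\<lambda>(a,b). \<Sum>j<(1::nat). of_real 1 * (\<lambda>j a. v $ a) j a * cnj ((\<lambda>j a. v $ a) j b))"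
    unfolding proj_def by (simp add: card_lessThan)
  also have "psd \<dots>" by (rule psd_gram) simp
  finally show ?thesis .
qed

lemma proj_idem: assumes n: "(\<Sum>k<dim_vec v. cmod (v $ k) ^ 2) = 1"
  shows "proj v * proj v = proj v"
proof (rule eq_matI)
  let ?n = "dim_vec v"
  fix a b assume ab: "a < dim_row (proj v)" "b < dim_col (proj v)"
  hence a: "a < ?n" and b: "b < ?n" unfolding proj_def by auto
  have "(proj v * proj v) $$ (a,b) = (\<Sum>c<?n. proj v $$ (a,c) * proj v $$ (c,b))"
    using a b by (subst mm_idx) (auto simp: proj_def)
  also have "\<dots> = (\<Sum>c<?n. v $ a * cnj (v $ b) * (cnj (v $ c) * v $ c))"
    using a b by (intro sum.cong refl) (simp add: proj_idx mult_ac)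
  also have "\<dots> = v $ a * cnj (v $ b) * ipn ?n v v" unfolding ipn_def by (simp add: sum_distrib_left)
  also have "ipn ?n v v = 1" unfolding ipn_self n by simp
  finally show "(proj v * proj v) $$ (a,b) = proj v $$ (a,b)" using a b by (simp add: proj_idx)
qed (auto simp: proj_def)

lemma trace_proj: assumes S: "S \<in> carrier_mat (dim_vec v) (dim_vec v)"
  shows "mtrace (proj v * S) = ipn (dim_vec v) v (S *\<^sub>v v)"
proof -
  let ?n = "dim_vec v"
  have "mtrace (proj v * S) = (\<Sum>r<?n. \<Sum>c<?n. v $ r * cnj (v $ c) * S $$ (c,r))"
    unfolding mtrace_def
  proof (intro sum.cong)
    fix r assume "r \<in> {..<?n}"
    hence r: "r < ?n" by simp
    have "(proj v * S) $$ (r,r) = (\<Sum>c<?n. proj v $$ (r,c) * S $$ (c,r))"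
      using r S by (subst mm_idx) (auto simp: proj_def)
    also have "\<dots> = (\<Sum>c<?n. v $ r * cnj (v $ c) * S $$ (c,r))"
      using r by (intro sum.cong refl) (simp add: proj_idx)
    finally show "(proj v * S) $$ (r,r) = (\<Sum>c<?n. v $ r * cnj (v $ c) * S $$ (c,r))" .
  qed (simp add: proj_def)
  also have "\<dots> = (\<Sum>c<?n. \<Sum>r<?n. cnj (v $ c) * (S $$ (c,r) * v $ r))"
    by (subst sum.swap) (intro sum.cong refl, simp only: mult.commute mult.left_commute)
  also have "\<dots> = ipn ?n v (S *\<^sub>v v)"
    unfolding ipn_def using S by (intro sum.cong refl) (simp add: mv_idx sum_distrib_left)
  finally show ?thesis .
qed


lemma delta_sum: "j0 < (b::nat) \<Longrightarrow> (\<Sum>j'<b. c * (if j0 = j' then 1 else 0) * g j') = (c * g j0 :: complex)"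
proof -
  assume j0: "j0 < b"
  have "(\<Sum>j'<b. c * (if j0 = j' then 1 else 0) * g j') = (\<Sum>j'<b. if j0 = j' then c * g j' else 0)"
    by (intro sum.cong) auto
  also have "\<dots> = c * g j0" using j0 by (simp add: sum.delta')
  finally show ?thesis .
qed

lemma tensor_one_right_mv: assumes X: "X \<in> carrier_mat a a" and v: "dim_vec v = a * b" and r: "r < a * b"
  shows "(tensor X (1\<^sub>m b) *\<^sub>v v) $ r = (\<Sum>i'<a. X $$ (r div b, i') * v $ (i'*b + r mod b))"
proof -
  have b0: "b > 0" using r by (cases b) auto
  have "(tensor X (1\<^sub>m b) *\<^sub>v v) $ r = (\<Sum>i'<a. \<Sum>j'<b. X $$ (r div b, i') * 1\<^sub>m b $$ (r mod b, j') * v $ (i'*b+j'))"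
    using tensor_mv[OF X one_carrier_mat v r] .
  also have "\<dots> = (\<Sum>i'<a. X $$ (r div b, i') * v $ (i'*b + r mod b))"
  proof (intro sum.cong refl)
    fix i' have "(\<Sum>j'<b. X $$ (r div b, i') * 1\<^sub>m b $$ (r mod b, j') * v $ (i'*b+j')) =
       (\<Sum>j'<b. X $$ (r div b, i') * (if r mod b = j' then 1 else 0) * v $ (i'*b+j'))"
      using b0 by (intro sum.cong refl) simp
    also have "\<dots> = X $$ (r div b, i') * v $ (i'*b + r mod b)" using b0 by (intro delta_sum) simp
    finally show "(\<Sum>j'<b. X $$ (r div b, i') * 1\<^sub>m b $$ (r mod b, j') * v $ (i'*b+j')) = X $$ (r div b, i') * v $ (i'*b + r mod b)" .
  qed
  finally show ?thesis .
qed

lemma tensor_one_left_mv: assumes Y: "Y \<in> carrier_mat b b" and v: "dim_vec v = a * b" and r: "r < a * b"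
  shows "(tensor (1\<^sub>m a) Y *\<^sub>v v) $ r = (\<Sum>j'<b. Y $$ (r mod b, j') * v $ ((r div b)*b + j'))"
proof -
  have b0: "b > 0" using r by (cases b) auto
  have ra: "r div b < a" using r by (simp add: less_mult_imp_div_less)
  have "(tensor (1\<^sub>m a) Y *\<^sub>v v) $ r = (\<Sum>i'<a. \<Sum>j'<b. 1\<^sub>m a $$ (r div b, i') * Y $$ (r mod b, j') * v $ (i'*b+j'))"
    using tensor_mv[OF one_carrier_mat Y v r] .
  also have "\<dots> = (\<Sum>j'<b. \<Sum>i'<a. 1\<^sub>m a $$ (r div b, i') * (Y $$ (r mod b, j') * v $ (i'*b+j')))"
    by (subst sum.swap) (simp only: mult.assoc)
  also have "\<dots> = (\<Sum>j'<b. Y $$ (r mod b, j') * v $ ((r div b)*b + j'))"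
  proof (intro sum.cong refl)
    fix j' have "(\<Sum>i'<a. 1\<^sub>m a $$ (r div b, i') * (Y $$ (r mod b, j') * v $ (i'*b+j'))) =
       (\<Sum>i'<a. 1 * (if r div b = i' then 1 else 0) * (Y $$ (r mod b, j') * v $ (i'*b+j')))"
      using ra by (intro sum.cong refl) simp
    also have "\<dots> = 1 * (Y $$ (r mod b, j') * v $ ((r div b)*b+j'))" using ra by (rule delta_sum)
    finally show "(\<Sum>i'<a. 1\<^sub>m a $$ (r div b, i') * (Y $$ (r mod b, j') * v $ (i'*b+j'))) =
       Y $$ (r mod b, j') * v $ ((r div b)*b + j')" by simp
  qed
  finally show ?thesis .
qed

context
  fixes dA dB :: nat and \<psi> :: "complex vec"
  assumes dB: "dB \<ge> 1" and dimv: "dim_vec \<psi> = dA * dB"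
begin

definition "rA = mat dA dA (\<lambda>(i,i'). \<Sum>j<dB. \<psi> $ (i*dB+j) * cnj (\<psi> $ (i'*dB+j)))"
definition "rB = mat dB dB (\<lambda>(j,j'). \<Sum>i<dA. \<psi> $ (i*dB+j) * cnj (\<psi> $ (i*dB+j')))"

lemma rA_eq: "ptrace_B dA dB (proj \<psi>) = rA"
  unfolding ptrace_B_def rA_def
  by (intro eq_matI) (auto intro!: sum.cong simp: proj_idx dimv idx_lt)

lemma rB_eq: "ptrace_A dA dB (proj \<psi>) = rB"
  unfolding ptrace_A_def rB_def
  by (intro eq_matI) (auto intro!: sum.cong simp: proj_idx dimv idx_lt)

lemma rA_carrier: "rA \<in> carrier_mat dA dA" unfolding rA_def by simp
lemma rB_carrier: "rB \<in> carrier_mat dB dB" unfolding rB_def by simp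

lemma rA_psd: "psd rA"
proof -
  have "rA = mat dA dA (\<lambda>(i,i'). \<Sum>j<dB. of_real 1 * (\<lambda>j i. \<psi> $ (i*dB+j)) j i * cnj ((\<lambda>j i. \<psi> $ (i*dB+j)) j i'))"
    unfolding rA_def by simp
  also have "psd \<dots>" by (rule psd_gram) simp
  finally show ?thesis .
qed

lemma rB_psd: "psd rB"
proof -
  have "rB = mat dB dB (\<lambda>(j,j'). \<Sum>i<dA. of_real 1 * (\<lambda>i j. \<psi> $ (i*dB+j)) i j * cnj ((\<lambda>i j. \<psi> $ (i*dB+j)) i j'))"
    unfolding rB_def by simp
  also have "psd \<dots>" by (rule psd_gram) simp
  finally show ?thesis .
qed

lemma key_identity: "tensor rA (1\<^sub>m dB) *\<^sub>v \<psi> = tensor (1\<^sub>m dA) rB *\<^sub>v \<psi>"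
proof (rule eq_vecI)
  fix r assume "r < dim_vec (tensor (1\<^sub>m dA) rB *\<^sub>v \<psi>)"
  hence r: "r < dA * dB" using rB_carrier by simp
  define i0 where "i0 = r div dB"
  define j0 where "j0 = r mod dB"
  have i0: "i0 < dA" unfolding i0_def using r by (simp add: less_mult_imp_div_less)
  have j0: "j0 < dB" unfolding j0_def using dB by simp
  let ?f = "\<lambda>i j. \<psi> $ (i*dB+j)"
  have "(tensor rA (1\<^sub>m dB) *\<^sub>v \<psi>) $ r = (\<Sum>i'<dA. rA $$ (i0, i') * ?f i' j0)"
    unfolding i0_def j0_def by (rule tensor_one_right_mv[OF rA_carrier dimv r])
  also have "\<dots> = (\<Sum>i'<dA. \<Sum>j'<dB. ?f i0 j' * cnj (?f i' j') * ?f i' j0)"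
    using i0 by (intro sum.cong refl) (simp add: rA_def sum_distrib_right)
  finally have L: "(tensor rA (1\<^sub>m dB) *\<^sub>v \<psi>) $ r = (\<Sum>i'<dA. \<Sum>j'<dB. ?f i0 j' * cnj (?f i' j') * ?f i' j0)" .
  have "(tensor (1\<^sub>m dA) rB *\<^sub>v \<psi>) $ r = (\<Sum>j'<dB. rB $$ (j0, j') * ?f i0 j')"
    unfolding i0_def j0_def by (rule tensor_one_left_mv[OF rB_carrier dimv r])
  also have "\<dots> = (\<Sum>j'<dB. \<Sum>i'<dA. ?f i' j0 * cnj (?f i' j') * ?f i0 j')"
    using j0 by (intro sum.cong refl) (simp add: rB_def sum_distrib_right)
  also have "\<dots> = (\<Sum>i'<dA. \<Sum>j'<dB. ?f i0 j' * cnj (?f i' j') * ?f i' j0)"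
    by (subst sum.swap) (intro sum.cong refl, simp only: mult.commute mult.left_commute)
  finally show "(tensor rA (1\<^sub>m dB) *\<^sub>v \<psi>) $ r = (tensor (1\<^sub>m dA) rB *\<^sub>v \<psi>) $ r" using L by simp
qed (use rA_carrier rB_carrier in simp)

lemma value_identity: "ipn (dA*dB) \<psi> (tensor rA (1\<^sub>m dB) *\<^sub>v \<psi>) = mtrace (rA * rA)"
proof -
  let ?f = "\<lambda>i j. \<psi> $ (i*dB+j)"
  have "ipn (dA*dB) \<psi> (tensor rA (1\<^sub>m dB) *\<^sub>v \<psi>) =
     (\<Sum>i<dA. \<Sum>j<dB. cnj (?f i j) * (tensor rA (1\<^sub>m dB) *\<^sub>v \<psi>) $ (i*dB+j))"
    unfolding ipn_def by (rule sum_split)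
  also have "\<dots> = (\<Sum>i<dA. \<Sum>j<dB. cnj (?f i j) * (\<Sum>i'<dA. rA $$ (i, i') * ?f i' j))"
  proof (intro sum.cong refl)
    fix i j assume ij: "i \<in> {..<dA}" "j \<in> {..<dB}"
    have "(tensor rA (1\<^sub>m dB) *\<^sub>v \<psi>) $ (i*dB+j) = (\<Sum>i'<dA. rA $$ ((i*dB+j) div dB, i') * \<psi> $ (i'*dB + (i*dB+j) mod dB))"
      using ij idx_lt[of i dA j dB] by (intro tensor_one_right_mv[OF rA_carrier dimv]) auto
    thus "cnj (?f i j) * (tensor rA (1\<^sub>m dB) *\<^sub>v \<psi>) $ (i*dB+j) = cnj (?f i j) * (\<Sum>i'<dA. rA $$ (i, i') * ?f i' j)"
      using ij by simp
  qed
  also have "\<dots> = (\<Sum>i<dA. \<Sum>i'<dA. rA $$ (i, i') * (\<Sum>j<dB. ?f i' j * cnj (?f i j)))"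
  proof (rule sum.cong[OF refl])
    fix i
    have "(\<Sum>j<dB. cnj (?f i j) * (\<Sum>i'<dA. rA $$ (i, i') * ?f i' j)) = (\<Sum>j<dB. \<Sum>i'<dA. rA $$ (i, i') * (?f i' j * cnj (?f i j)))"
      by (intro sum.cong refl) (simp add: sum_distrib_left mult_ac)
    also have "\<dots> = (\<Sum>i'<dA. \<Sum>j<dB. rA $$ (i, i') * (?f i' j * cnj (?f i j)))" by (rule sum.swap)
    also have "\<dots> = (\<Sum>i'<dA. rA $$ (i, i') * (\<Sum>j<dB. ?f i' j * cnj (?f i j)))" by (simp only: sum_distrib_left)
    finally show "(\<Sum>j<dB. cnj (?f i j) * (\<Sum>i'<dA. rA $$ (i, i') * ?f i' j)) = (\<Sum>i'<dA. rA $$ (i, i') * (\<Sum>j<dB. ?f i' j * cnj (?f i j)))" .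
  qed
  also have "\<dots> = (\<Sum>i<dA. \<Sum>i'<dA. rA $$ (i, i') * rA $$ (i', i))"
    by (intro sum.cong refl) (simp add: rA_def)
  also have "\<dots> = mtrace (rA * rA)"
    unfolding mtrace_def using rA_carrier by (intro sum.cong) (auto simp: mm_idx)
  finally show ?thesis .
qed

end


theorem mainTheorem3:
  fixes dA dB :: nat and \<psi> :: "complex vec"
  assumes "dA \<ge> 1" and "dB \<ge> 1"
    and "dim_vec \<psi> = dA * dB"
    and "(\<Sum>k<dA * dB. cmod (\<psi> $ k) ^ 2) = 1"
  shows "D2 (proj \<psi>) (tensor (ptrace_B dA dB (proj \<psi>)) (ptrace_A dA dB (proj \<psi>)))
         = concurrence dA dB (proj \<psi>)"
proof -
  note dB = assms(2) and dimv = assms(3)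
  define N where "N = dA * dB"
  define P where "P = proj \<psi>"
  have Pc: "P \<in> carrier_mat N N" unfolding P_def N_def using proj_carrier[of \<psi>] dimv by simp
  have Pp: "psd P" unfolding P_def by (rule proj_psd)
  have PP: "P * P = P" unfolding P_def using assms(4) dimv by (intro proj_idem) simp
  have mP: "msqrt P = P" using Pp PP by (intro msqrt_eq) auto
  have eA: "ptrace_B dA dB P = rA dA dB \<psi>" unfolding P_def by (rule rA_eq[OF dB dimv])
  have eB: "ptrace_A dA dB P = rB dA dB \<psi>" unfolding P_def by (rule rB_eq[OF dB dimv])
  define A where "A = rA dA dB \<psi>"
  define B where "B = rB dA dB \<psi>"
  have Ac: "A \<in> carrier_mat dA dA" unfolding A_def by (rule rA_carrier[OF dB dimv])
  have Bc: "B \<in> carrier_mat dB dB" unfolding B_def by (rule rB_carrier[OF dB dimv])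
  have Ap: "psd A" unfolding A_def by (rule rA_psd[OF dB dimv])
  have Bp: "psd B" unfolding B_def by (rule rB_psd[OF dB dimv])
  define RA where "RA = msqrt A"
  define RB where "RB = msqrt B"
  have RA: "psd RA" "RA \<in> carrier_mat dA dA" "RA * RA = A" unfolding RA_def using msqrt_props[OF Ap] Ac by auto
  have RB: "psd RB" "RB \<in> carrier_mat dB dB" "RB * RB = B" unfolding RB_def using msqrt_props[OF Bp] Bc by auto
  define S where "S = tensor RA RB"
  have Sc: "S \<in> carrier_mat N N" unfolding S_def N_def by (rule tensor_carrier[OF RA(2) RB(2)])
  have Sp: "psd S" unfolding S_def by (rule psd_tensor[OF RA(1,2) RB(1,2)])
  have SS: "S * S = tensor A B" unfolding S_def using RA RB by (simp add: tensor_mult[of _ dA _ _ dB])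
  have mS: "msqrt (tensor A B) = S" using Sp SS Sc Ac Bc N_def by (intro msqrt_eq) auto
  define E where "E = tensor RA (1\<^sub>m dB)"
  define F where "F = tensor (1\<^sub>m dA) RB"
  have Ec: "E \<in> carrier_mat N N" unfolding E_def N_def by (rule tensor_carrier[OF RA(2) one_carrier_mat])
  have Fc: "F \<in> carrier_mat N N" unfolding F_def N_def by (rule tensor_carrier[OF one_carrier_mat RB(2)])
  have Ep: "psd E" unfolding E_def by (rule psd_tensor[OF RA(1,2) psd_one one_carrier_mat])
  have Fp: "psd F" unfolding F_def by (rule psd_tensor[OF psd_one one_carrier_mat RB(1,2)])
  have EF: "E * F = S" unfolding E_def F_def S_def using RA RB by (simp add: tensor_mult[of _ dA _ _ dB])
  have FE: "F * E = S" unfolding E_def F_def S_def using RA RB by (simp add: tensor_mult[of _ dA _ _ dB])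
  have EE: "E * E = tensor A (1\<^sub>m dB)" unfolding E_def using RA by (simp add: tensor_mult[of _ dA _ _ dB])
  have FF: "F * F = tensor (1\<^sub>m dA) B" unfolding F_def using RB by (simp add: tensor_mult[of _ dA _ _ dB])
  have vc: "\<psi> \<in> carrier_vec N" unfolding N_def using dimv by (rule carrier_vecI)
  have K: "tensor A (1\<^sub>m dB) *\<^sub>v \<psi> = tensor (1\<^sub>m dA) B *\<^sub>v \<psi>"
    unfolding A_def B_def by (rule key_identity[OF dB dimv])
  define d where "d = F *\<^sub>v \<psi> - E *\<^sub>v \<psi>"
  have dc: "d \<in> carrier_vec N" unfolding d_def using Ec Fc vc by simp
  have Ed: "E *\<^sub>v d = S *\<^sub>v \<psi> - tensor A (1\<^sub>m dB) *\<^sub>v \<psi>"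
  proof -
    have "E *\<^sub>v d = E *\<^sub>v (F *\<^sub>v \<psi>) - E *\<^sub>v (E *\<^sub>v \<psi>)" unfolding d_def
      using Ec Fc vc by (intro mult_minus_distrib_mat_vec[of _ N N]) auto
    also have "E *\<^sub>v (F *\<^sub>v \<psi>) = (E * F) *\<^sub>v \<psi>" using Ec Fc vc by (simp add: assoc_mult_mat_vec)
    also have "E *\<^sub>v (E *\<^sub>v \<psi>) = (E * E) *\<^sub>v \<psi>" using Ec vc by (simp add: assoc_mult_mat_vec)
    finally show ?thesis unfolding EF EE .
  qed
  have Fd: "F *\<^sub>v d = tensor (1\<^sub>m dA) B *\<^sub>v \<psi> - S *\<^sub>v \<psi>"
  proof -
    have "F *\<^sub>v d = F *\<^sub>v (F *\<^sub>v \<psi>) - F *\<^sub>v (E *\<^sub>v \<psi>)" unfolding d_def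
      using Ec Fc vc by (intro mult_minus_distrib_mat_vec[of _ N N]) auto
    also have "F *\<^sub>v (F *\<^sub>v \<psi>) = (F * F) *\<^sub>v \<psi>" using Fc vc by (simp add: assoc_mult_mat_vec)
    also have "F *\<^sub>v (E *\<^sub>v \<psi>) = (F * E) *\<^sub>v \<psi>" using Ec Fc vc by (simp add: assoc_mult_mat_vec)
    finally show ?thesis unfolding FF FE .
  qed
  have T1c: "tensor A (1\<^sub>m dB) \<in> carrier_mat N N" unfolding N_def by (rule tensor_carrier[OF Ac one_carrier_mat])
  have T2c: "tensor (1\<^sub>m dA) B \<in> carrier_mat N N" unfolding N_def by (rule tensor_carrier[OF one_carrier_mat Bc])
  have dS: "dim_row S = N" using Sc by (rule carrier_matD)
  have dT1: "dim_row (tensor A (1\<^sub>m dB)) = N" using T1c by (rule carrier_matD)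
  have dT2: "dim_row (tensor (1\<^sub>m dA) B) = N" using T2c by (rule carrier_matD)
  have sum0: "E *\<^sub>v d + F *\<^sub>v d = 0\<^sub>v N"
  proof (rule eq_vecI)
    fix r assume "r < dim_vec (0\<^sub>v N :: complex vec)"
    hence r: "r < N" by simp
    have "(tensor A (1\<^sub>m dB) *\<^sub>v \<psi>) $ r = (tensor (1\<^sub>m dA) B *\<^sub>v \<psi>) $ r" using K by simp
    thus "(E *\<^sub>v d + F *\<^sub>v d) $ r = 0\<^sub>v N $ r" unfolding Ed Fd using r dS dT1 dT2 by simp
  qed (use Ec Fc in simp)
  have "qf E d + qf F d = ipn N d (E *\<^sub>v d + F *\<^sub>v d)"
    using Ec Fc dc by (simp add: qf_ipn ipn_add_right)
  also have "\<dots> = 0" unfolding sum0 ipn_def by simp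
  finally have s0: "qf E d + qf F d = 0" .
  have n1: "0 \<le> Re (qf E d)" using Ep Ec dc by (intro psd_qf_nonneg) auto
  have n2: "0 \<le> Re (qf F d)" using Fp Fc dc by (intro psd_qf_nonneg) auto
  have "Re (qf E d) + Re (qf F d) = 0" using arg_cong[OF s0, of Re] by simp
  hence "Re (qf E d) = 0" using n1 n2 by linarith
  moreover have "Im (qf E d) = 0" using psd_herm[OF Ep] Ec dc by (intro herm_qf_Im) auto
  ultimately have "qf E d = 0" by (simp add: complex_eq_iff)
  hence Ed0: "E *\<^sub>v d = 0\<^sub>v N" using psd_null[OF Ep] Ec dc by auto
  have SK: "S *\<^sub>v \<psi> = tensor A (1\<^sub>m dB) *\<^sub>v \<psi>"
  proof (rule eq_vecI)
    fix r assume "r < dim_vec (tensor A (1\<^sub>m dB) *\<^sub>v \<psi>)"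
    hence r: "r < N" using dT1 by simp
    have "(E *\<^sub>v d) $ r = 0" using Ed0 r by simp
    thus "(S *\<^sub>v \<psi>) $ r = (tensor A (1\<^sub>m dB) *\<^sub>v \<psi>) $ r" unfolding Ed using r dS dT1 by simp
  qed (use dS dT1 in simp)
  have "mtrace (P * S) = ipn N \<psi> (S *\<^sub>v \<psi>)" unfolding P_def N_def
    using trace_proj[of S \<psi>] Sc dimv N_def by simp
  also have "\<dots> = mtrace (A * A)" unfolding SK N_def A_def by (rule value_identity[OF dB dimv])
  finally have tr: "mtrace (P * S) = mtrace (A * A)" .
  show ?thesis
    unfolding D2_def concurrence_def P_def[symmetric] eA eB A_def[symmetric] B_def[symmetric] mP mS tr ..
qed


end
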